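(* Let $\phi$ be an LTL formula. If some tableau for $\phi$ has a ticked leaf, then $\phi$ is satisfiable. Moreover, this remains true for tableaux in which the PRUNE and PRUNE$_0$ rules are not applied even when applicable, i.e. every ticked branch encodes a model of $\phi$.
   Context: LTL formulas over a countable set $AP$ of atoms are built from atoms $p\in AP$ and the constant $\top$ using $\neg\alpha$, $\alpha\wedge\beta$, $X\alpha$ and $\alpha U\beta$. We write $\bot$ for $\neg\top$. A structure is a triple $(S,R,g)$ where $S$ is a finite set, $R\subseteq S\times S$ is serial (every state has an $R$-successor), and $g:S\to 2^{AP}$. A fullpath is a sequence $\sigma=\langle s_0,s_1,\dots\rangle$ with $(s_i,s_{i+1})\in R$ for all $i$. We write $\sigma_i=s_i$ and $\sigma_{\ge j}=\langle s_j,s_{j+1},\dots\rangle$. Truth is defined as follows: - $\sigma\models p$ iff $p\in g(\sigma_0)$; - $\sigma\models\top$ always; - $\neg$ and $\wedge$ are classical; - $\sigma\models X\alpha$ iff $\sigma_{\ge1}\models\alpha$; - $\sigma\models\alpha U\beta$ iff there is $i\ge0$ with $\sigma_{\ge i}\models\beta$ and $\sigma_{\ge j}\models\alpha$ for all $0\le j<i$. A formula is satisfiable iff it is true on some fullpath of some structure. Tableau. A tableau for $\phi$ is a finite rooted tree. Each node $u$ carries a finite set of formulas $\Gamma_u$ (its label), and the root is labelled $\{\phi\}$. We write $u<v$ when $u$ is a proper ancestor of $v$ and $u\le v$ when it is an ancestor or equal. A formula is elementary if it is an atom, a negated atom, or of the form $X\alpha$ or $\neg X\alpha$. A label is poised if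 it is nonempty, contains no pair $\alpha,\neg\alpha$, and all its formulas are elementary. An $X$-eventuality of a poised label is a member of the form $X(\alpha U\beta)$. Static rules are written "parent label / children", where $\{\chi\}\mathbin{\dot\cup}\Delta$ means $\chi\notin\Delta$: - EMPTY: $\{\}$ / tick. - CONTRADICTION: $\{\alpha,\neg\alpha\}\mathbin{\dot\cup}\Delta$ / cross. - $\neg\top$: $\{\neg\top\}\mathbin{\dot\cup}\Delta$ / cross. - $\top$: $\{\top\}\mathbin{\dot\cup}\Delta$ / $\Delta$. - $\wedge$: $\{\alpha\wedge\beta\}\mathbin{\dot\cup}\Delta$ / $\Delta\cup\{\alpha,\beta\}$. - $U$: $\{\alpha U\beta\}\mathbin{\dot\cup}\Delta$ / two children $\Delta\cup\{\beta\}$ and $\Delta\cup\{\alpha,X(\alpha U\beta)\}$. - $\neg\neg$: $\{\neg\neg\alpha\}\mathbin{\dot\cup}\Delta$ / $\Delta\cup\{\alpha\}$. - $\neg\wedge$: $\{\neg(\alpha\wedge\beta)\}\mathbin{\dot\cup}\Delta$ / two children $\Delta\cup\{\neg\alpha\}$ and $\Delta\cup\{\neg\beta\}$. - $\neg U$: $\{\neg(\alpha U\beta)\}\mathbin{\dot\cup}\Delta$ / two children $\Delta\cup\{\neg\alpha,\neg\beta\}$ and $\Delta\cup\{\neg\beta,X\neg(\alpha U\beta)\}$. Non-static rules apply only to a leaf $v$ with poised label. The first applicable one in the following list is used. - LOOP: if some $u<v$ has poised $\Gamma_u\supseteq\Gamma_v$, and for every $X(\alpha U\beta)\in\Gamma_u$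 there is $w$ with $u<w\le v$ and $\beta\in\Gamma_w$, then $v$ is ticked. - PRUNE: if $u<v'<v$ all have the same poised label $\Gamma$, and for every $X(\alpha U\beta)\in\Gamma$, whenever some $x$ with $v'<x\le v$ has $\beta\in\Gamma_x$ there is $y$ with $u<y\le v'$ and $\beta\in\Gamma_y$, then $v$ is crossed. - PRUNE$_0$: if $u<v$ share the same poised label $\Gamma$, $\Gamma$ contains at least one $X$-eventuality, and for no $X(\alpha U\beta)\in\Gamma$ is there $x$ with $u<x\le v$ and $\beta\in\Gamma_x$, then $v$ is crossed. - TRANSITION: otherwise $v$ gets one child labelled $\{\alpha: X\alpha\in\Gamma_v\}\cup\{\neg\alpha:\neg X\alpha\in\Gamma_v\}$. A tableau is constructed from the root by repeatedly choosing any leaf that is neither ticked nor crossed and applying an applicable rule. For non-poised labels this means any applicable static rule to any suitable pivot formula. A tableau is finished if every leaf is ticked or crossed, and successful if some leaf is ticked. *)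

theory Defs
  imports "HOL-Library.Sublist"
begin

datatype 'a ltl =
    Atom 'a
  | Top
  | Neg "'a ltl"
  | And "'a ltl" "'a ltl"
  | Next "'a ltl"
  | Until "'a ltl" "'a ltl"

text \<open>Truth of a formula on a fullpath sigma (a sequence of states, here natural
  numbers) under the valuation g.  The suffix starting at j is (%k. sigma (k + j)).\<close>
fun holds :: "(nat \<Rightarrow> 'a set) \<Rightarrow> (nat \<Rightarrow> nat) \<Rightarrow> 'a ltl \<Rightarrow> bool" where
  "holds g \<sigma> (Atom p) = (p \<in> g (\<sigma> 0))"
| "holds g \<sigma> Top = True"
| "holds g \<sigma> (Neg a) = (\<not> holds g \<sigma> a)"
| "holds g \<sigma> (And a b) = (holds g \<sigma> a \<and> holds g \<sigma> b)"
| "holds g \<sigma> (Next a) = holds g (\<lambda>k. \<sigma> (Suc k)) a"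
| "holds g \<sigma> (Until a b) =
     (\<exists>i. holds g (\<lambda>k. \<sigma> (k + i)) b \<and> (\<forall>j<i. holds g (\<lambda>k. \<sigma> (k + j)) a))"

text \<open>A structure (S,R,g) with S finite and R serial on S.  States are taken to be
  natural numbers; every finite structure is isomorphic to one of this form.\<close>
definition ltl_structure :: "nat set \<Rightarrow> (nat \<times> nat) set \<Rightarrow> bool" where
  "ltl_structure S R \<longleftrightarrow> finite S \<and> R \<subseteq> S \<times> S \<and> (\<forall>s\<in>S. \<exists>t. (s, t) \<in> R)"

definition fullpath :: "(nat \<times> nat) set \<Rightarrow> (nat \<Rightarrow> nat) \<Rightarrow> bool" where
  "fullpath R \<sigma> \<longleftrightarrow> (\<forall>i. (\<sigma> i, \<sigma> (Suc i)) \<in> R)"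

definition satisfiable :: "'a ltl \<Rightarrow> bool" where
  "satisfiable \<phi> \<longleftrightarrow>
     (\<exists>S R (g :: nat \<Rightarrow> 'a set) \<sigma>. ltl_structure S R \<and> fullpath R \<sigma> \<and> holds g \<sigma> \<phi>)"

fun elementary :: "'a ltl \<Rightarrow> bool" where
  "elementary (Atom p) = True"
| "elementary (Neg (Atom p)) = True"
| "elementary (Next a) = True"
| "elementary (Neg (Next a)) = True"
| "elementary _ = False"

definition poised :: "'a ltl set \<Rightarrow> bool" where
  "poised \<Gamma> \<longleftrightarrow> \<Gamma> \<noteq> {} \<and> (\<forall>a. \<not> (a \<in> \<Gamma> \<and> Neg a \<in> \<Gamma>)) \<and> (\<forall>f\<in>\<Gamma>. elementary f)"

datatype mark = Ticked | Crossed | Unexpanded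

text \<open>A tableau is represented by a finite prefix-closed set N of node addresses
  (lists of child indices, root = []), a labelling L and a marking M.
  The ancestor relation u < v is strict_prefix u v, u \<le> v is prefix u v.\<close>

definition children :: "nat list set \<Rightarrow> nat list \<Rightarrow> nat list set" where
  "children N v = {w \<in> N. \<exists>i. w = v @ [i]}"

definition loop_app :: "(nat list \<Rightarrow> 'a ltl set) \<Rightarrow> nat list \<Rightarrow> bool" where
  "loop_app L v \<longleftrightarrow> poised (L v) \<and>
     (\<exists>u. strict_prefix u v \<and> poised (L u) \<and> L v \<subseteq> L u \<and>
        (\<forall>a b. Next (Until a b) \<in> L u \<longrightarrow>
           (\<exists>w. strict_prefix u w \<and> prefix w v \<and> b \<in> L w)))"

definition prune_app :: "(nat list \<Rightarrow> 'a ltl set) \<Rightarrow> nat list \<Rightarrow> bool" where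
  "prune_app L v \<longleftrightarrow> poised (L v) \<and>
     (\<exists>u v'. strict_prefix u v' \<and> strict_prefix v' v \<and> L u = L v \<and> L v' = L v \<and>
        (\<forall>a b. Next (Until a b) \<in> L v \<longrightarrow>
           (\<exists>x. strict_prefix v' x \<and> prefix x v \<and> b \<in> L x) \<longrightarrow>
           (\<exists>y. strict_prefix u y \<and> prefix y v' \<and> b \<in> L y)))"

definition prune0_app :: "(nat list \<Rightarrow> 'a ltl set) \<Rightarrow> nat list \<Rightarrow> bool" where
  "prune0_app L v \<longleftrightarrow> poised (L v) \<and>
     (\<exists>u. strict_prefix u v \<and> L u = L v \<and>
        (\<exists>a b. Next (Until a b) \<in> L v) \<and>
        \<not> (\<exists>a b x. Next (Until a b) \<in> L v \<and> strict_prefix u x \<and> prefix x v \<and> b \<in> L x))"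

definition transition_label :: "'a ltl set \<Rightarrow> 'a ltl set" where
  "transition_label \<Gamma> = {a. Next a \<in> \<Gamma>} \<union> {Neg a | a. Neg (Next a) \<in> \<Gamma>}"

definition static_step :: "nat list set \<Rightarrow> (nat list \<Rightarrow> 'a ltl set) \<Rightarrow> nat list \<Rightarrow> bool" where
  "static_step N L v \<longleftrightarrow> \<not> poised (L v) \<and>
     (\<exists>\<chi>\<in>L v. let \<Delta> = L v - {\<chi>} in
        (\<chi> = Top \<and> children N v = {v @ [0]} \<and> L (v @ [0]) = \<Delta>)
      \<or> (\<exists>a b. \<chi> = And a b \<and> children N v = {v @ [0]} \<and> L (v @ [0]) = \<Delta> \<union> {a, b})
      \<or> (\<exists>a b. \<chi> = Until a b \<and> children N v = {v @ [0], v @ [1]} \<and>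
           L (v @ [0]) = \<Delta> \<union> {b} \<and> L (v @ [1]) = \<Delta> \<union> {a, Next (Until a b)})
      \<or> (\<exists>a. \<chi> = Neg (Neg a) \<and> children N v = {v @ [0]} \<and> L (v @ [0]) = \<Delta> \<union> {a})
      \<or> (\<exists>a b. \<chi> = Neg (And a b) \<and> children N v = {v @ [0], v @ [1]} \<and>
           L (v @ [0]) = \<Delta> \<union> {Neg a} \<and> L (v @ [1]) = \<Delta> \<union> {Neg b})
      \<or> (\<exists>a b. \<chi> = Neg (Until a b) \<and> children N v = {v @ [0], v @ [1]} \<and>
           L (v @ [0]) = \<Delta> \<union> {Neg a, Neg b} \<and>
           L (v @ [1]) = \<Delta> \<union> {Neg b, Next (Neg (Until a b))}))"

text \<open>The flag use_prune says whether the PRUNE / PRUNE0 rules are in use.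
  With use_prune = True this is exactly the tableau of the paper (possibly still under
  construction: leaves may be Unexpanded).\<close>
definition tableau_node :: "bool \<Rightarrow> nat list set \<Rightarrow> (nat list \<Rightarrow> 'a ltl set) \<Rightarrow>
    (nat list \<Rightarrow> mark) \<Rightarrow> nat list \<Rightarrow> bool" where
  "tableau_node use_prune N L M v \<longleftrightarrow>
     (if children N v = {} then
        (M v = Ticked \<longrightarrow> (L v = {} \<or> loop_app L v)) \<and>
        (M v = Crossed \<longrightarrow>
           (\<not> poised (L v) \<and> ((\<exists>a. a \<in> L v \<and> Neg a \<in> L v) \<or> Neg Top \<in> L v))
         \<or> (use_prune \<and> poised (L v) \<and> \<not> loop_app L v \<and> (prune_app L v \<or> prune0_app L v)))
      else
        M v = Unexpanded \<and>
        (static_step N L v \<or>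
         (poised (L v) \<and> \<not> loop_app L v \<and>
          (use_prune \<longrightarrow> \<not> prune_app L v \<and> \<not> prune0_app L v) \<and>
          children N v = {v @ [0]} \<and> L (v @ [0]) = transition_label (L v))))"

definition is_tableau :: "bool \<Rightarrow> 'a ltl \<Rightarrow> nat list set \<Rightarrow> (nat list \<Rightarrow> 'a ltl set) \<Rightarrow>
    (nat list \<Rightarrow> mark) \<Rightarrow> bool" where
  "is_tableau use_prune \<phi> N L M \<longleftrightarrow>
     finite N \<and> [] \<in> N \<and> (\<forall>v\<in>N. \<forall>u. prefix u v \<longrightarrow> u \<in> N) \<and>
     L [] = {\<phi>} \<and> (\<forall>v\<in>N. tableau_node use_prune N L M v)"

end

theory Submission
  imports Defs
begin

definition step_child :: "'a ltl set \<Rightarrow> 'a ltl \<Rightarrow> 'a ltl set \<Rightarrow> bool" where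
 "step_child \<Gamma> \<chi> \<Gamma>' \<longleftrightarrow> \<chi> \<in> \<Gamma> \<and>
   ((\<chi> = Top \<and> \<Gamma>' = \<Gamma> - {\<chi>})
  \<or> (\<exists>a b. \<chi> = And a b \<and> \<Gamma>' = (\<Gamma> - {\<chi>}) \<union> {a,b})
  \<or> (\<exists>a b. \<chi> = Until a b \<and> (\<Gamma>' = (\<Gamma> - {\<chi>}) \<union> {b} \<or> \<Gamma>' = (\<Gamma> - {\<chi>}) \<union> {a, Next (Until a b)}))
  \<or> (\<exists>a. \<chi> = Neg (Neg a) \<and> \<Gamma>' = (\<Gamma> - {\<chi>}) \<union> {a})
  \<or> (\<exists>a b. \<chi> = Neg (And a b) \<and> (\<Gamma>' = (\<Gamma> - {\<chi>}) \<union> {Neg a} \<or> \<Gamma>' = (\<Gamma> - {\<chi>}) \<union> {Neg b}))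
  \<or> (\<exists>a b. \<chi> = Neg (Until a b) \<and> (\<Gamma>' = (\<Gamma> - {\<chi>}) \<union> {Neg a, Neg b} \<or> \<Gamma>' = (\<Gamma> - {\<chi>}) \<union> {Neg b, Next (Neg (Until a b))})))"

lemma step_child_keep: "step_child \<Gamma> \<chi> \<Gamma>' \<Longrightarrow> f \<in> \<Gamma> \<Longrightarrow> f \<noteq> \<chi> \<Longrightarrow> f \<in> \<Gamma>'"
  unfolding step_child_def by auto

lemma poised_elem: "poised \<Gamma> \<Longrightarrow> f \<in> \<Gamma> \<Longrightarrow> elementary f"
  unfolding poised_def by auto

locale run =
  fixes \<Lambda> :: "nat \<Rightarrow> 'a ltl set"
  assumes R1: "\<And>j. \<not> poised (\<Lambda> j) \<Longrightarrow> \<Lambda> j = {} \<or> (\<exists>\<chi>. step_child (\<Lambda> j) \<chi> (\<Lambda> (Suc j)))"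
  and R2: "\<And>j. poised (\<Lambda> j) \<Longrightarrow> transition_label (\<Lambda> j) \<subseteq> \<Lambda> (Suc j)"
  and R4: "\<And>j. \<exists>d. poised (\<Lambda> (j+d)) \<or> \<Lambda> (j+d) = {}"
  and Fair: "\<And>j a b. (\<forall>j'\<ge>j. \<exists>j''\<ge>j'. poised (\<Lambda> j'')) \<Longrightarrow>
      (\<forall>j'\<ge>j. poised (\<Lambda> j') \<longrightarrow> Next (Until a b) \<in> \<Lambda> j') \<Longrightarrow> \<exists>j'\<ge>j. b \<in> \<Lambda> j'"
begin

definition time :: "nat \<Rightarrow> nat" where
  "time j = card {i. i < j \<and> poised (\<Lambda> i)}"

lemma time_Suc: "time (Suc j) = time j + (if poised (\<Lambda> j) then 1 else 0)"
proof -
  have e: "{i. i < Suc j \<and> poised (\<Lambda> i)} = (if poised (\<Lambda> j) then insert j {i. i < j \<and> poised (\<Lambda> i)} else {i. i < j \<and> poised (\<Lambda> i)})"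
    by (auto simp: less_Suc_eq)
  show ?thesis unfolding time_def e by simp
qed

lemma time_mono: "j \<le> j' \<Longrightarrow> time j \<le> time j'"
  unfolding time_def by (rule card_mono) auto

lemma time_const: "(\<forall>i. j \<le> i \<longrightarrow> i < j + d \<longrightarrow> \<not> poised (\<Lambda> i)) \<Longrightarrow> time (j + d) = time j"
  by (induction d) (auto simp: time_Suc)

lemma time_gap: assumes "time j < time j'" shows "\<exists>i. j \<le> i \<and> i < j' \<and> poised (\<Lambda> i)"
proof (rule ccontr)
  assume n: "\<not> ?thesis"
  show False
  proof (cases "j \<le> j'")
    case True
    then obtain d where d: "j' = j + d" using le_Suc_ex by blast
    have "time (j + d) = time j" by (rule time_const) (use n d in auto)
    then show False using assms d by simp
  next
    case False
    then show False using time_mono[of j' j] assms by simp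
  qed
qed

lemma poised_unique: assumes "poised (\<Lambda> i)" "poised (\<Lambda> j)" "time i = time j" shows "i = j"
proof (rule ccontr)
  assume "i \<noteq> j"
  then consider "i < j" | "j < i" by linarith
  then show False
  proof cases
    case 1
    then have "time (Suc i) \<le> time j" by (intro time_mono) simp
    then show False using assms by (simp add: time_Suc)
  next
    case 2
    then have "time (Suc j) \<le> time i" by (intro time_mono) simp
    then show False using assms by (simp add: time_Suc)
  qed
qed

lemma seg_aux: "poised (\<Lambda> (j+e)) \<or> \<Lambda> (j+e) = {} \<Longrightarrow> f \<in> \<Lambda> j \<Longrightarrow>
  \<exists>d. (\<forall>i<d. \<not> poised (\<Lambda> (j+i))) \<and> f \<in> \<Lambda> (j+d) \<and>
      (poised (\<Lambda> (j+d)) \<or> (\<not> poised (\<Lambda> (j+d)) \<and> step_child (\<Lambda> (j+d)) f (\<Lambda> (Suc (j+d)))))"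
proof (induction e arbitrary: j)
  case 0
  then show ?case by (intro exI[of _ 0]) auto
next
  case (Suc e)
  show ?case
  proof (cases "poised (\<Lambda> j)")
    case True
    then show ?thesis using Suc by (intro exI[of _ 0]) auto
  next
    case False
    then obtain \<chi> where ch: "step_child (\<Lambda> j) \<chi> (\<Lambda> (Suc j))" using R1[of j] Suc.prems by auto
    show ?thesis
    proof (cases "f = \<chi>")
      case True
      then show ?thesis using ch False Suc.prems by (intro exI[of _ 0]) auto
    next
      case ne: False
      have "f \<in> \<Lambda> (Suc j)" using step_child_keep[OF ch Suc.prems(2) ne] .
      moreover have "poised (\<Lambda> (Suc j + e)) \<or> \<Lambda> (Suc j + e) = {}" using Suc.prems by simp
      ultimately obtain d where d: "(\<forall>i<d. \<not> poised (\<Lambda> (Suc j+i))) \<and> f \<in> \<Lambda> (Suc j+d) \<and>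
      (poised (\<Lambda> (Suc j+d)) \<or> (\<not> poised (\<Lambda> (Suc j+d)) \<and> step_child (\<Lambda> (Suc j+d)) f (\<Lambda> (Suc (Suc j+d)))))"
        using Suc.IH by blast
      show ?thesis
      proof (intro exI[of _ "Suc d"] conjI)
        show "\<forall>i<Suc d. \<not> poised (\<Lambda> (j + i))"
          using d False by (auto simp: less_Suc_eq_0_disj)
      qed (use d in auto)
    qed
  qed
qed

lemma seg: "f \<in> \<Lambda> j \<Longrightarrow>
  \<exists>j'. time j' = time j \<and> f \<in> \<Lambda> j' \<and>
      (poised (\<Lambda> j') \<or> (\<not> poised (\<Lambda> j') \<and> step_child (\<Lambda> j') f (\<Lambda> (Suc j'))))"
proof -
  assume f: "f \<in> \<Lambda> j"
  obtain e where "poised (\<Lambda> (j+e)) \<or> \<Lambda> (j+e) = {}" using R4 by blast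
  from seg_aux[OF this f] obtain d where d: "(\<forall>i<d. \<not> poised (\<Lambda> (j+i))) \<and> f \<in> \<Lambda> (j+d) \<and>
      (poised (\<Lambda> (j+d)) \<or> (\<not> poised (\<Lambda> (j+d)) \<and> step_child (\<Lambda> (j+d)) f (\<Lambda> (Suc (j+d)))))" by blast
  have "time (j+d) = time j" by (rule time_const) (use d in \<open>auto simp: le_iff_add\<close>)
  with d show ?thesis by blast
qed

lemma piv: "f \<in> \<Lambda> j \<Longrightarrow> \<not> elementary f \<Longrightarrow>
  \<exists>j'. time j' = time j \<and> time (Suc j') = time j \<and> step_child (\<Lambda> j') f (\<Lambda> (Suc j'))"
  using seg[of f j] poised_elem by (fastforce simp: time_Suc)

lemma elem: "f \<in> \<Lambda> j \<Longrightarrow> (\<And>\<Gamma> \<Gamma>'. \<not> step_child \<Gamma> f \<Gamma>') \<Longrightarrow>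
  \<exists>j'. time j' = time j \<and> poised (\<Lambda> j') \<and> f \<in> \<Lambda> j'"
  using seg[of f j] by blast

lemma next_step: assumes "Next f \<in> \<Lambda> j" shows "\<exists>j'. time j' = Suc (time j) \<and> f \<in> \<Lambda> j'
   \<and> (\<forall>i. poised (\<Lambda> i) \<longrightarrow> time i = time j \<longrightarrow> Next f \<in> \<Lambda> i)"
proof -
  obtain j' where j': "time j' = time j" "poised (\<Lambda> j')" "Next f \<in> \<Lambda> j'"
    using elem[OF assms] by (auto simp: step_child_def)
  have "f \<in> \<Lambda> (Suc j')" using R2[OF j'(2)] j'(3) by (auto simp: transition_label_def)
  moreover have "time (Suc j') = Suc (time j)" using j' by (simp add: time_Suc)
  moreover have "\<forall>i. poised (\<Lambda> i) \<longrightarrow> time i = time j \<longrightarrow> Next f \<in> \<Lambda> i"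
    using poised_unique j' by metis
  ultimately show ?thesis by blast
qed

lemma negnext_step: assumes "Neg (Next f) \<in> \<Lambda> j" shows "\<exists>j'. time j' = Suc (time j) \<and> Neg f \<in> \<Lambda> j'"
proof -
  obtain j' where j': "time j' = time j" "poised (\<Lambda> j')" "Neg (Next f) \<in> \<Lambda> j'"
    using elem[OF assms] by (auto simp: step_child_def)
  have "Neg f \<in> \<Lambda> (Suc j')" using R2[OF j'(2)] j'(3) by (auto simp: transition_label_def)
  moreover have "time (Suc j') = Suc (time j)" using j' by (simp add: time_Suc)
  ultimately show ?thesis by blast
qed

end


locale run_val = run \<Lambda> for \<Lambda> :: "nat \<Rightarrow> 'a ltl set" +
  fixes g :: "nat \<Rightarrow> 'a set" and \<sigma> :: "nat \<Rightarrow> nat"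
  assumes val: "\<And>j q. poised (\<Lambda> j) \<Longrightarrow> (q \<in> g (\<sigma> (time j))) = (Atom q \<in> \<Lambda> j)"
begin

definition H :: "'a ltl \<Rightarrow> nat \<Rightarrow> bool" where
  "H f t = holds g (\<lambda>k. \<sigma> (k + t)) f"

lemma H_Atom: "H (Atom q) t = (q \<in> g (\<sigma> t))" by (simp add: H_def)
lemma H_Top: "H Top t" by (simp add: H_def)
lemma H_Neg: "H (Neg f) t = (\<not> H f t)" by (simp add: H_def)
lemma H_And: "H (And a b) t = (H a t \<and> H b t)" by (simp add: H_def)
lemma H_Next: "H (Next a) t = H a (Suc t)" by (simp add: H_def)
lemma H_Until: "H (Until a b) t = (\<exists>i. H b (i + t) \<and> (\<forall>i'<i. H a (i' + t)))"
  by (simp add: H_def add.assoc)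

lemma truth: "(f \<in> \<Lambda> j \<longrightarrow> H f (time j)) \<and> (Neg f \<in> \<Lambda> j \<longrightarrow> \<not> H f (time j))"
proof (induction f arbitrary: j)
  case (Atom q)
  show ?case
  proof (intro conjI impI)
    assume "Atom q \<in> \<Lambda> j"
    then obtain j' where "time j' = time j" "poised (\<Lambda> j')" "Atom q \<in> \<Lambda> j'"
      using elem by (fastforce simp: step_child_def)
    then show "H (Atom q) (time j)" using val by (metis H_Atom)
  next
    assume "Neg (Atom q) \<in> \<Lambda> j"
    then obtain j' where j': "time j' = time j" "poised (\<Lambda> j')" "Neg (Atom q) \<in> \<Lambda> j'"
      using elem by (fastforce simp: step_child_def)
    then have "Atom q \<notin> \<Lambda> j'" unfolding poised_def by blast
    then show "\<not> H (Atom q) (time j)" using val j' by (metis H_Atom)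
  qed
next
  case Top
  show ?case
  proof (intro conjI impI)
    assume "Neg Top \<in> \<Lambda> j"
    then obtain j' where j': "poised (\<Lambda> j')" "Neg Top \<in> \<Lambda> j'"
      using elem by (fastforce simp: step_child_def)
    then show "\<not> H Top (time j)" using poised_elem by fastforce
  qed (simp add: H_Top)
next
  case (Neg f)
  show ?case
  proof (intro conjI impI)
    assume "Neg f \<in> \<Lambda> j"
    then show "H (Neg f) (time j)" using Neg.IH by (simp add: H_Neg)
  next
    assume a: "Neg (Neg f) \<in> \<Lambda> j"
    obtain j' where "time (Suc j') = time j" "step_child (\<Lambda> j') (Neg (Neg f)) (\<Lambda> (Suc j'))"
      using piv[OF a] by auto
    then have "f \<in> \<Lambda> (Suc j')" "time (Suc j') = time j" by (auto simp: step_child_def)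
    then show "\<not> H (Neg f) (time j)" using Neg.IH by (metis H_Neg)
  qed
next
  case (And a b)
  show ?case
  proof (intro conjI impI)
    assume h: "And a b \<in> \<Lambda> j"
    obtain j' where "time (Suc j') = time j" "step_child (\<Lambda> j') (And a b) (\<Lambda> (Suc j'))"
      using piv[OF h] by auto
    then have "a \<in> \<Lambda> (Suc j')" "b \<in> \<Lambda> (Suc j')" "time (Suc j') = time j" by (auto simp: step_child_def)
    then show "H (And a b) (time j)" using And.IH by (metis H_And)
  next
    assume h: "Neg (And a b) \<in> \<Lambda> j"
    obtain j' where "time (Suc j') = time j" "step_child (\<Lambda> j') (Neg (And a b)) (\<Lambda> (Suc j'))"
      using piv[OF h] by auto
    then have "Neg a \<in> \<Lambda> (Suc j') \<or> Neg b \<in> \<Lambda> (Suc j')" "time (Suc j') = time j" by (auto simp: step_child_def)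
    then show "\<not> H (And a b) (time j)" using And.IH by (metis H_And)
  qed
next
  case (Next f)
  show ?case
  proof (intro conjI impI)
    assume h: "Next f \<in> \<Lambda> j"
    then show "H (Next f) (time j)" using next_step[OF h] Next.IH by (metis H_Next)
  next
    assume h: "Neg (Next f) \<in> \<Lambda> j"
    then show "\<not> H (Next f) (time j)" using negnext_step[OF h] Next.IH by (metis H_Next)
  qed
next
  case (Until a b)
  have IHa: "\<And>j. a \<in> \<Lambda> j \<Longrightarrow> H a (time j)" "\<And>j. Neg a \<in> \<Lambda> j \<Longrightarrow> \<not> H a (time j)" using Until.IH by auto
  have IHb: "\<And>j. b \<in> \<Lambda> j \<Longrightarrow> H b (time j)" "\<And>j. Neg b \<in> \<Lambda> j \<Longrightarrow> \<not> H b (time j)" using Until.IH by auto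
  define Q where "Q t = (\<exists>j. time j = t \<and> Until a b \<in> \<Lambda> j)" for t
  define G where "G t = (\<exists>i. H b (i + t) \<and> (\<forall>i'<i. H a (i' + t)))" for t
  have stepQ: "G t \<or> (H a t \<and> Q (Suc t) \<and> (\<forall>i. poised (\<Lambda> i) \<longrightarrow> time i = t \<longrightarrow> Next (Until a b) \<in> \<Lambda> i))"
    if "Q t" for t
  proof -
    obtain j where j: "time j = t" "Until a b \<in> \<Lambda> j" using \<open>Q t\<close> Q_def by blast
    obtain j' where j': "time (Suc j') = t" "step_child (\<Lambda> j') (Until a b) (\<Lambda> (Suc j'))"
      using piv[OF j(2)] j by auto
    then have "b \<in> \<Lambda> (Suc j') \<or> (a \<in> \<Lambda> (Suc j') \<and> Next (Until a b) \<in> \<Lambda> (Suc j'))"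
      by (auto simp: step_child_def)
    then show ?thesis
    proof
      assume "b \<in> \<Lambda> (Suc j')"
      then have "H b t" using IHb j' by metis
      then have "G t" unfolding G_def by (intro exI[of _ 0]) simp
      then show ?thesis ..
    next
      assume h: "a \<in> \<Lambda> (Suc j') \<and> Next (Until a b) \<in> \<Lambda> (Suc j')"
      then have "H a t" using IHa j' by metis
      moreover from next_step[of "Until a b" "Suc j'"] h j'
      have "Q (Suc t) \<and> (\<forall>i. poised (\<Lambda> i) \<longrightarrow> time i = t \<longrightarrow> Next (Until a b) \<in> \<Lambda> i)"
        unfolding Q_def by auto
      ultimately show ?thesis by blast
    qed
  qed
  have Gback: "G t" if "G (Suc t)" "H a t" for t
  proof -
    obtain i where i: "H b (i + Suc t)" "\<forall>i'<i. H a (i' + Suc t)" using \<open>G (Suc t)\<close> G_def by blast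
    show ?thesis unfolding G_def
    proof (intro exI[of _ "Suc i"] conjI allI impI)
      show "H b (Suc i + t)" using i by simp
    next
      fix i' assume "i' < Suc i"
      then show "H a (i' + t)" using i that(2) by (cases i') auto
    qed
  qed
  show ?case
  proof (intro conjI impI)
    assume h: "Until a b \<in> \<Lambda> j"
    define t0 where "t0 = time j"
    have Q0: "Q t0" using h Q_def t0_def by blast
    have "G t0"
    proof (rule ccontr)
      assume nG: "\<not> G t0"
      have all: "Q (t0 + n) \<and> \<not> G (t0 + n)" for n
      proof (induction n)
        case 0 then show ?case using Q0 nG by simp
      next
        case (Suc n)
        then have "H a (t0+n) \<and> Q (Suc (t0+n))" using stepQ by blast
        then show ?case using Suc Gback by auto
      qed
      have Ha: "H a (t0 + n)" for n using all stepQ by blast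
      have Xall: "\<forall>j'\<ge>j. poised (\<Lambda> j') \<longrightarrow> Next (Until a b) \<in> \<Lambda> j'"
      proof (intro allI impI)
        fix j' assume "j \<le> j'" "poised (\<Lambda> j')"
        then have "time j' \<ge> t0" using time_mono t0_def by auto
        then obtain n where n: "time j' = t0 + n" using le_Suc_ex by blast
        then show "Next (Until a b) \<in> \<Lambda> j'" using stepQ all[of n] \<open>poised (\<Lambda> j')\<close> by blast
      qed
      have inf: "\<forall>j'\<ge>j. \<exists>j''\<ge>j'. poised (\<Lambda> j'')"
      proof (intro allI impI)
        fix j' assume "j \<le> j'"
        then have "time j' \<ge> t0" using time_mono t0_def by auto
        then obtain n where n: "time j' = t0 + n" using le_Suc_ex by blast
        obtain j3 where "time j3 = Suc (time j')" using all[of "Suc n"] n Q_def by auto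
        then obtain i where "j' \<le> i" "poised (\<Lambda> i)" using time_gap[of j' j3] by auto
        then show "\<exists>j''\<ge>j'. poised (\<Lambda> j'')" by blast
      qed
      obtain j' where j': "j' \<ge> j" "b \<in> \<Lambda> j'" using Fair[OF inf Xall] by blast
      then have "time j' \<ge> t0" using time_mono t0_def by auto
      then obtain n where n: "time j' = n + t0" using le_Suc_ex add.commute by metis
      have "H b (n + t0)" using IHb j' n by metis
      then have "G t0" unfolding G_def using Ha by (metis add.commute)
      then show False using nG by simp
    qed
    then show "H (Until a b) (time j)" using H_Until G_def t0_def by simp
  next
    assume h: "Neg (Until a b) \<in> \<Lambda> j"
    define Q' where "Q' t = (\<exists>j. time j = t \<and> Neg (Until a b) \<in> \<Lambda> j)" for t
    have stepQ': "\<not> H b t \<and> (\<not> H a t \<or> Q' (Suc t))" if "Q' t" for t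
    proof -
      obtain j where j: "time j = t" "Neg (Until a b) \<in> \<Lambda> j" using \<open>Q' t\<close> Q'_def by blast
      obtain j' where j': "time (Suc j') = t" "step_child (\<Lambda> j') (Neg (Until a b)) (\<Lambda> (Suc j'))"
        using piv[OF j(2)] j by auto
      then have "Neg b \<in> \<Lambda> (Suc j') \<and> (Neg a \<in> \<Lambda> (Suc j') \<or> Next (Neg (Until a b)) \<in> \<Lambda> (Suc j'))"
        by (auto simp: step_child_def)
      moreover have "Q' (Suc t)" if "Next (Neg (Until a b)) \<in> \<Lambda> (Suc j')"
        using next_step[OF that] j' Q'_def by auto
      ultimately show ?thesis using IHa IHb j' by metis
    qed
    have "\<forall>t. Q' t \<longrightarrow> (\<forall>i'<i. H a (i' + t)) \<longrightarrow> \<not> H b (i + t)" for i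
    proof (induction i)
      case 0 then show ?case using stepQ' by simp
    next
      case (Suc i)
      show ?case
      proof (intro allI impI)
        fix t assume q: "Q' t" and ha: "\<forall>i'<Suc i. H a (i' + t)"
        then have "H a t" by auto
        then have "Q' (Suc t)" using stepQ' q by blast
        moreover have "\<forall>i'<i. H a (i' + Suc t)" using ha by auto
        ultimately have "\<not> H b (i + Suc t)" using Suc.IH by blast
        then show "\<not> H b (Suc i + t)" by simp
      qed
    qed
    moreover have "Q' (time j)" using h Q'_def by blast
    ultimately show "\<not> H (Until a b) (time j)" using H_Until by blast
  qed
qed

end


lemma (in run) run_sat:
  fixes lab :: "nat \<Rightarrow> nat" and Lz :: "nat \<Rightarrow> 'a ltl set" and K :: nat
  assumes lab: "\<And>j. \<Lambda> j = Lz (lab j)" and bound: "\<And>j. lab j \<le> K" and root: "\<phi> \<in> \<Lambda> 0"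
  shows "satisfiable \<phi>"
proof -
  define P where "P t = (\<lambda>j. poised (\<Lambda> j) \<and> time j = t)" for t
  define \<sigma> where "\<sigma> t = (if \<exists>j. P t j then lab (SOME j. P t j) else Suc K)" for t
  define g :: "nat \<Rightarrow> 'a set" where "g n = {q. Atom q \<in> Lz n}" for n
  have sig: "\<sigma> (time j) = lab j" if "poised (\<Lambda> j)" for j
  proof -
    have "P (time j) j" using that P_def by simp
    moreover have "(SOME i. P (time j) i) = j"
      by (rule some_equality) (use that poised_unique P_def in auto)
    ultimately show ?thesis using \<sigma>_def by auto
  qed
  interpret rv: run_val \<Lambda> g \<sigma>
    by unfold_locales (simp add: sig g_def lab)
  have "rv.H \<phi> (time 0)" using rv.truth root by blast
  then have hp: "holds g \<sigma> \<phi>" by (simp add: rv.H_def time_def)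
  define S where "S = range \<sigma>"
  define R where "R = {(\<sigma> i, \<sigma> (Suc i)) | i. True}"
  have "S \<subseteq> {..Suc K}" using bound by (auto simp: S_def \<sigma>_def le_SucI)
  then have "finite S" using finite_subset by blast
  then have "ltl_structure S R" unfolding ltl_structure_def S_def R_def by auto
  moreover have "fullpath R \<sigma>" unfolding fullpath_def R_def by auto
  ultimately show ?thesis unfolding satisfiable_def using hp by blast
qed


lemma branch_step:
  assumes T: "is_tableau up \<phi> N L M" and v: "v \<in> N" and i: "i < length v"
  shows "(poised (L (take i v)) \<longrightarrow> L (take (Suc i) v) = transition_label (L (take i v))) \<and>
         (\<not> poised (L (take i v)) \<longrightarrow> (\<exists>\<chi>. step_child (L (take i v)) \<chi> (L (take (Suc i) v))))"
proof -
  define u where "u = take i v"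
  have pc: "\<forall>v\<in>N. \<forall>u. prefix u v \<longrightarrow> u \<in> N" and tn: "\<forall>v\<in>N. tableau_node up N L M v"
    using T unfolding is_tableau_def by auto
  have ts: "take (Suc i) v = u @ [v ! i]" using i u_def by (simp add: take_Suc_conv_app_nth)
  have uN: "u \<in> N" using pc v u_def take_is_prefix by blast
  have wN: "u @ [v ! i] \<in> N" using pc v ts take_is_prefix by metis
  have wc: "u @ [v ! i] \<in> children N u" using wN by (auto simp: children_def)
  then have ne: "children N u \<noteq> {}" by auto
  have node: "static_step N L u \<or> (poised (L u) \<and> children N u = {u @ [0]} \<and> L (u @ [0]) = transition_label (L u))"
  proof -
    have "tableau_node up N L M u" using tn uN by blast
    then show ?thesis using ne unfolding tableau_node_def by (simp split: if_splits) blast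
  qed
  show ?thesis
  proof (cases "poised (L u)")
    case True
    then have "children N u = {u @ [0]} \<and> L (u @ [0]) = transition_label (L u)"
      using node by (auto simp: static_step_def)
    then show ?thesis using wc True ts u_def by auto
  next
    case False
    then obtain \<chi> where ch: "\<chi> \<in> L u" and
      c: "let \<Delta> = L u - {\<chi>} in
        (\<chi> = Top \<and> children N u = {u @ [0]} \<and> L (u @ [0]) = \<Delta>)
      \<or> (\<exists>a b. \<chi> = And a b \<and> children N u = {u @ [0]} \<and> L (u @ [0]) = \<Delta> \<union> {a, b})
      \<or> (\<exists>a b. \<chi> = Until a b \<and> children N u = {u @ [0], u @ [1]} \<and>
           L (u @ [0]) = \<Delta> \<union> {b} \<and> L (u @ [1]) = \<Delta> \<union> {a, Next (Until a b)})
      \<or> (\<exists>a. \<chi> = Neg (Neg a) \<and> children N u = {u @ [0]} \<and> L (u @ [0]) = \<Delta> \<union> {a})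
      \<or> (\<exists>a b. \<chi> = Neg (And a b) \<and> children N u = {u @ [0], u @ [1]} \<and>
           L (u @ [0]) = \<Delta> \<union> {Neg a} \<and> L (u @ [1]) = \<Delta> \<union> {Neg b})
      \<or> (\<exists>a b. \<chi> = Neg (Until a b) \<and> children N u = {u @ [0], u @ [1]} \<and>
           L (u @ [0]) = \<Delta> \<union> {Neg a, Neg b} \<and>
           L (u @ [1]) = \<Delta> \<union> {Neg b, Next (Neg (Until a b))})"
      using node unfolding static_step_def by auto
    have "step_child (L u) \<chi> (L (u @ [v ! i]))"
      using c ch wc unfolding Let_def step_child_def by auto
    then show ?thesis using False ts u_def by auto
  qed
qed


lemma prefix_take: "prefix w v \<Longrightarrow> w = take (length w) v"
  by (auto simp: prefix_def)

lemma trans_mono: "A \<subseteq> B \<Longrightarrow> transition_label A \<subseteq> transition_label B"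
  by (auto simp: transition_label_def)

theorem mainTheorem2:
  fixes \<phi> :: "'a ltl"
    and N :: "nat list set" and L :: "nat list \<Rightarrow> 'a ltl set" and M :: "nat list \<Rightarrow> mark"
    and use_prune :: bool
  assumes "is_tableau use_prune \<phi> N L M"
    and "\<exists>v\<in>N. M v = Ticked"
  shows "satisfiable \<phi>"
proof -
  note T = assms(1)
  obtain v where v: "v \<in> N" "M v = Ticked" using assms(2) by blast
  have "tableau_node use_prune N L M v" using T v unfolding is_tableau_def by blast
  then have leaf: "L v = {} \<or> loop_app L v" using v(2) unfolding tableau_node_def
    by (simp split: if_splits)
  define k where "k = length v"
  define T0 where "T0 n = L (take n v)" for n
  have Tk: "T0 k = L v" by (simp add: T0_def k_def)
  have T00: "T0 0 = {\<phi>}" using T by (simp add: T0_def is_tableau_def)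
  have bs: "\<And>i. i < k \<Longrightarrow> (poised (T0 i) \<longrightarrow> T0 (Suc i) = transition_label (T0 i)) \<and>
         (\<not> poised (T0 i) \<longrightarrow> (\<exists>\<chi>. step_child (T0 i) \<chi> (T0 (Suc i))))"
    using branch_step[OF T v(1)] by (simp add: T0_def k_def)
  show ?thesis
  proof (cases "L v = {}")
    case True
    define \<Lambda> where "\<Lambda> j = T0 (min j k)" for j
    have Lk: "j \<ge> k \<Longrightarrow> \<Lambda> j = {}" for j using True Tk by (simp add: \<Lambda>_def)
    have np: "\<not> poised {}" by (simp add: poised_def)
    interpret run \<Lambda>
    proof
      fix j assume "\<not> poised (\<Lambda> j)"
      then show "\<Lambda> j = {} \<or> (\<exists>\<chi>. step_child (\<Lambda> j) \<chi> (\<Lambda> (Suc j)))"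
        using bs[of j] Lk[of j] by (cases "j < k") (auto simp: \<Lambda>_def)
    next
      fix j assume p: "poised (\<Lambda> j)"
      then have "j < k" using Lk np by (metis not_le)
      then show "transition_label (\<Lambda> j) \<subseteq> \<Lambda> (Suc j)" using bs[of j] p by (auto simp: \<Lambda>_def)
    next
      fix j show "\<exists>d. poised (\<Lambda> (j+d)) \<or> \<Lambda> (j+d) = {}"
        using Lk[of "j + (k - j)"] by (intro exI[of _ "k - j"]) simp
    next
      fix j a b assume inf: "\<forall>j'\<ge>j. \<exists>j''\<ge>j'. poised (\<Lambda> j'')"
        and "\<forall>j'\<ge>j. poised (\<Lambda> j') \<longrightarrow> Next (Until a b) \<in> \<Lambda> j'"
      obtain j'' where "j'' \<ge> j + k" "poised (\<Lambda> j'')" using inf[rule_format, of "j+k"] by auto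
      then show "\<exists>j'\<ge>j. b \<in> \<Lambda> j'" using Lk[of j''] np by auto
    qed
    show ?thesis
      by (rule run_sat[where lab = "\<lambda>j. min j k" and Lz = T0 and K = k]) (auto simp: \<Lambda>_def T00)
  next
    case False
    then have lp: "loop_app L v" using leaf by blast
    then obtain u where u: "strict_prefix u v" "poised (L u)" "L v \<subseteq> L u"
      "\<And>a b. Next (Until a b) \<in> L u \<Longrightarrow> \<exists>w. strict_prefix u w \<and> prefix w v \<and> b \<in> L w"
      and pv: "poised (L v)"
      unfolding loop_app_def by blast
    define m where "m = length u"
    have mk: "m < k" using u(1) m_def k_def prefix_length_less by blast
    have Tm: "T0 m = L u" using u(1) prefix_take[of u v] by (simp add: T0_def m_def)
    define lab where "lab j = (if j \<le> k then j else Suc m + (j - k - 1) mod (k - m))" for j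
    have L3: "lab j \<le> k" for j
    proof -
      have "(j - k - 1) mod (k - m) < k - m" using mk by simp
      then have "Suc m + (j - k - 1) mod (k - m) \<le> k" using mk by linarith
      then show ?thesis unfolding lab_def by auto
    qed
    have L1: "lab j < k \<Longrightarrow> lab (Suc j) = Suc (lab j)" for j
    proof -
      assume a: "lab j < k"
      show ?thesis
      proof (cases "j < k")
        case True then show ?thesis by (simp add: lab_def)
      next
        case False
        then have jk: "j > k" using a by (cases "j = k") (auto simp: lab_def)
        then have "Suc m + (j - k - 1) mod (k - m) < k" using a by (simp add: lab_def)
        then have "Suc ((j - k - 1) mod (k - m)) \<noteq> k - m" by linarith
        then have "(j - k) mod (k - m) = Suc ((j - k - 1) mod (k - m))"
          using mod_Suc[of "j - k - 1" "k - m"] jk by (simp add: Suc_diff_Suc)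
        then show ?thesis using jk by (simp add: lab_def)
      qed
    qed
    have L2: "lab j = k \<Longrightarrow> lab (Suc j) = Suc m" for j
    proof -
      assume a: "lab j = k"
      show ?thesis
      proof (cases "j \<le> k")
        case True then have "j = k" using a by (simp add: lab_def)
        then show ?thesis by (simp add: lab_def)
      next
        case False
        then have "Suc m + (j - k - 1) mod (k - m) = k" using a by (simp add: lab_def)
        then have "Suc ((j - k - 1) mod (k - m)) = k - m" by linarith
        then have "(j - k) mod (k - m) = 0"
          using mod_Suc[of "j - k - 1" "k - m"] False by (simp add: Suc_diff_Suc)
        then show ?thesis using False by (simp add: lab_def)
      qed
    qed
    have L4: "\<exists>d. lab (j + d) = k" for j
    proof -
      have "\<forall>j. k - lab j = n \<longrightarrow> (\<exists>d. lab (j + d) = k)" for n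
      proof (induction n)
        case 0 then show ?case using L3 by (metis add_0_right diff_is_0_eq le_antisym)
      next
        case (Suc n)
        show ?case
        proof (intro allI impI)
          fix j assume "k - lab j = Suc n"
          then have "lab j < k" "k - lab (Suc j) = n" using L1 by auto
          then obtain d where "lab (Suc j + d) = k" using Suc.IH by blast
          then show "\<exists>d. lab (j + d) = k" by (metis add_Suc_shift add_Suc)
        qed
      qed
      then show ?thesis by blast
    qed
    have L5: "lab j = k \<Longrightarrow> Suc m + i \<le> k \<Longrightarrow> lab (j + Suc i) = Suc m + i" for j i
    proof (induction i)
      case 0 then show ?case using L2 by simp
    next
      case (Suc i)
      then have "lab (j + Suc i) = Suc m + i" by simp
      moreover have "Suc m + i < k" using Suc by simp
      ultimately show ?case using L1 by simp
    qed
    define \<Lambda> where "\<Lambda> j = T0 (lab j)" for j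
    interpret run \<Lambda>
    proof
      fix j assume np: "\<not> poised (\<Lambda> j)"
      then have "lab j \<noteq> k" using pv Tk by (auto simp: \<Lambda>_def)
      then have "lab j < k" using L3 le_neq_implies_less by blast
      then show "\<Lambda> j = {} \<or> (\<exists>\<chi>. step_child (\<Lambda> j) \<chi> (\<Lambda> (Suc j)))"
        using bs[of "lab j"] np L1 by (auto simp: \<Lambda>_def)
    next
      fix j assume p: "poised (\<Lambda> j)"
      show "transition_label (\<Lambda> j) \<subseteq> \<Lambda> (Suc j)"
      proof (cases "lab j = k")
        case True
        have "T0 (Suc m) = transition_label (T0 m)" using bs[of m] mk u(2) Tm by simp
        then show ?thesis using True L2 trans_mono[OF u(3)] Tk Tm by (simp add: \<Lambda>_def)
      next
        case False
        then have "lab j < k" using L3 le_neq_implies_less by blast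
        then show ?thesis using bs[of "lab j"] p L1 by (auto simp: \<Lambda>_def)
      qed
    next
      fix j show "\<exists>d. poised (\<Lambda> (j+d)) \<or> \<Lambda> (j+d) = {}"
        using L4[of j] pv Tk unfolding \<Lambda>_def by metis
    next
      fix j a b assume "\<forall>j'\<ge>j. \<exists>j''\<ge>j'. poised (\<Lambda> j'')" and X: "\<forall>j'\<ge>j. poised (\<Lambda> j') \<longrightarrow> Next (Until a b) \<in> \<Lambda> j'"
      obtain d where d: "lab (j + d) = k" using L4 by blast
      then have "\<Lambda> (j + d) = L v" using Tk by (simp add: \<Lambda>_def)
      then have "Next (Until a b) \<in> L v" using X[rule_format, of "j + d"] pv by simp
      then obtain w where w: "strict_prefix u w" "prefix w v" "b \<in> L w" using u(3,4) by blast
      define n where "n = length w"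
      have mn: "m < n" using w(1) prefix_length_less m_def n_def by blast
      have nk: "n \<le> k" using w(2) prefix_length_le n_def k_def by blast
      have Tn: "T0 n = L w" using prefix_take[OF w(2)] by (simp add: T0_def n_def)
      have "lab (j + d + Suc (n - Suc m)) = Suc m + (n - Suc m)"
        using L5[OF d, of "n - Suc m"] mn nk by linarith
      then have "lab (j + d + Suc (n - Suc m)) = n" using mn by simp
      then have "b \<in> \<Lambda> (j + d + Suc (n - Suc m))" using Tn w(3) by (simp add: \<Lambda>_def)
      then show "\<exists>j'\<ge>j. b \<in> \<Lambda> j'" by (intro exI[of _ "j + d + Suc (n - Suc m)"]) simp
    qed
    show ?thesis
      by (rule run_sat[where lab = lab and Lz = T0 and K = k]) (use L3 in \<open>auto simp: \<Lambda>_def T00 lab_def\<close>)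
  qed
qed

end
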